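(* Let $(\mathbf{k},\phi)$ be a difference field of characteristic zero such that $\mathbf{k}$ is a real field and its field of constants $C:=\mathbf{k}^{\phi}$ is real closed. Let $A\in \mathrm{GL}_n(\mathbf{k})$ and let $(R,\phi)$ be a Picard-Vessiot extension for $\phi Y=AY$ over $(\mathbf{k},\phi)$. Assume that $R\neq R[i]$, i.e. there is no $x\in R$ with $x^2+1=0$. Then $(R[i],\phi)$ is a Picard-Vessiot extension for $\phi Y=AY$ over $(\mathbf{k}[i],\phi)$.
   Context: A difference ring $(R,\phi)$ is a ring $R$ with a ring automorphism $\phi$; a difference ideal is an ideal stable under $\phi$; $(R,\phi)$ is simple if its only difference ideals are $(0)$ and $R$. A difference ring extension of $(\mathbf{k},\phi)$ is a ring extension with an automorphism restricting to $\phi$ on $\mathbf{k}$. A field is real if $0$ is not a sum of squares of nonzero elements; it is real closed if it has no proper real algebraic extension. A Picard-Vessiot extension for $\phi Y=AY$ over $(\mathbf{k},\phi)$ is a difference ring extension $(R,\phi)$ of $(\mathbf{k},\phi)$ such that (1) there exists $U\in\mathrm{GL}_n(R)$ with $\phi(U)=AU$; (2) $R$ is generated as a $\mathbf{k}$-algebra by the entries of $U$ and $\det(U)^{-1}$; (3) $(R,\phi)$ is a simple difference ring. For a difference ring $R$ with no element $x$ satisfying $x^2+1=0$, $R[i]:=R[X]/(X^2+1)$, with $\phi$ extended by $\phi(i)=i$; if $R$ contains such an $x$, the convention is $R[i]=R$. In particular $\mathbf{k}[i]$ is defined this way. *)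

theory Defs
  imports "Jordan_Normal_Form.Determinant" "HOL-Algebra.Ring"
begin

definition ring_automorphism :: "('a::comm_ring_1 \<Rightarrow> 'a) \<Rightarrow> bool" where
  "ring_automorphism f \<longleftrightarrow> bij f \<and> f 1 = 1 \<and>
     (\<forall>x y. f (x + y) = f x + f y) \<and> (\<forall>x y. f (x * y) = f x * f y)"

definition ring_embedding :: "('a::comm_ring_1 \<Rightarrow> 'b::comm_ring_1) \<Rightarrow> bool" where
  "ring_embedding f \<longleftrightarrow> inj f \<and> f 1 = 1 \<and>
     (\<forall>x y. f (x + y) = f x + f y) \<and> (\<forall>x y. f (x * y) = f x * f y)"

definition is_ideal :: "'a::comm_ring_1 set \<Rightarrow> bool" where
  "is_ideal I \<longleftrightarrow> 0 \<in> I \<and> (\<forall>x\<in>I. \<forall>y\<in>I. x + y \<in> I) \<and> (\<forall>r. \<forall>x\<in>I. r * x \<in> I)"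

definition difference_ideal :: "('a::comm_ring_1 \<Rightarrow> 'a) \<Rightarrow> 'a set \<Rightarrow> bool" where
  "difference_ideal \<sigma> I \<longleftrightarrow> is_ideal I \<and> \<sigma> ` I \<subseteq> I"

definition simple_difference_ring :: "('a::comm_ring_1 \<Rightarrow> 'a) \<Rightarrow> bool" where
  "simple_difference_ring \<sigma> \<longleftrightarrow> (\<forall>I. difference_ideal \<sigma> I \<longrightarrow> I = {0} \<or> I = UNIV)"

definition difference_ring_ext ::
  "('b::comm_ring_1 \<Rightarrow> 'b) \<Rightarrow> ('r::comm_ring_1 \<Rightarrow> 'r) \<Rightarrow> ('b \<Rightarrow> 'r) \<Rightarrow> bool" where
  "difference_ring_ext \<phi> \<sigma> \<iota> \<longleftrightarrow> ring_automorphism \<phi> \<and> ring_automorphism \<sigma> \<and>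
     ring_embedding \<iota> \<and> (\<forall>x. \<sigma> (\<iota> x) = \<iota> (\<phi> x))"

definition is_subring :: "'a::comm_ring_1 set \<Rightarrow> bool" where
  "is_subring T \<longleftrightarrow> 0 \<in> T \<and> 1 \<in> T \<and> (\<forall>x\<in>T. - x \<in> T) \<and>
     (\<forall>x\<in>T. \<forall>y\<in>T. x + y \<in> T) \<and> (\<forall>x\<in>T. \<forall>y\<in>T. x * y \<in> T)"

definition subring_gen :: "'a::comm_ring_1 set \<Rightarrow> 'a set" where
  "subring_gen S = \<Inter>{T. is_subring T \<and> S \<subseteq> T}"

definition GL_mat :: "nat \<Rightarrow> 'a::comm_ring_1 mat \<Rightarrow> bool" where
  "GL_mat n M \<longleftrightarrow> M \<in> carrier_mat n n \<and> (\<exists>d. d * det M = 1)"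

text \<open>The \<open>k\<close>-algebra generated by a set \<open>S\<close> is the subring generated by \<open>\<iota>(k) \<union> S\<close>.\<close>
definition picard_vessiot ::
  "('b::comm_ring_1 \<Rightarrow> 'b) \<Rightarrow> ('r::comm_ring_1 \<Rightarrow> 'r) \<Rightarrow> ('b \<Rightarrow> 'r) \<Rightarrow> nat \<Rightarrow> 'b mat \<Rightarrow> bool" where
  "picard_vessiot \<phi> \<sigma> \<iota> n A \<longleftrightarrow> difference_ring_ext \<phi> \<sigma> \<iota> \<and> A \<in> carrier_mat n n \<and>
     (\<exists>U d. GL_mat n U \<and> map_mat \<sigma> U = map_mat \<iota> A * U \<and> d * det U = 1 \<and>
        subring_gen (range \<iota> \<union> {U $$ (i, j) | i j. i < n \<and> j < n} \<union> {d}) = UNIV) \<and>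
     simple_difference_ring \<sigma>"

definition is_real :: "'a::comm_ring_1 set \<Rightarrow> bool" where
  "is_real S \<longleftrightarrow> (\<forall>xs. xs \<noteq> [] \<and> set xs \<subseteq> S - {0} \<longrightarrow> sum_list (map (\<lambda>x. x * x) xs) \<noteq> 0)"

definition real_ring_alg :: "('a, 'm) ring_scheme \<Rightarrow> bool" where
  "real_ring_alg L \<longleftrightarrow> (\<forall>xs. xs \<noteq> [] \<and> set xs \<subseteq> carrier L - {\<zero>\<^bsub>L\<^esub>} \<longrightarrow>
      (\<Oplus>\<^bsub>L\<^esub> i\<in>{..<length xs}. xs ! i \<otimes>\<^bsub>L\<^esub> xs ! i) \<noteq> \<zero>\<^bsub>L\<^esub>)"

text \<open>Extensions are field structures \<open>L\<close> together with an injective ring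
  homomorphism \<open>h : C \<rightarrow> L\<close>; every algebraic extension of \<open>C\<close> is isomorphic to one whose
  carrier lies in the type \<open>'k list \<times> nat\<close> (cardinality bound), so quantifying over
  such \<open>L\<close> covers all algebraic extensions up to isomorphism.\<close>
definition real_closed :: "'k::field set \<Rightarrow> bool" where
  "real_closed C \<longleftrightarrow> is_real C \<and>
     (\<forall>(L :: ('k list \<times> nat) ring) h.
        field L \<and> h ` C \<subseteq> carrier L \<and> inj_on h C \<and> h 1 = \<one>\<^bsub>L\<^esub> \<and>
        (\<forall>x\<in>C. \<forall>y\<in>C. h (x + y) = h x \<oplus>\<^bsub>L\<^esub> h y \<and> h (x * y) = h x \<otimes>\<^bsub>L\<^esub> h y) \<and>
        (\<forall>z\<in>carrier L. \<exists>cs. set cs \<subseteq> C \<and> (\<exists>c\<in>set cs. c \<noteq> 0) \<and>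
            (\<Oplus>\<^bsub>L\<^esub> i\<in>{..<length cs}. h (cs ! i) \<otimes>\<^bsub>L\<^esub> z [^]\<^bsub>L\<^esub> i) = \<zero>\<^bsub>L\<^esub>) \<and>
        real_ring_alg L
        \<longrightarrow> h ` C = carrier L)"

section \<open>Adjoining i: \<open>R[i] = R[X]/(X^2+1)\<close>, represented by pairs \<open>a + b i\<close>\<close>

datatype 'a gi = GI (re: 'a) (im: 'a)

instantiation gi :: (comm_ring_1) comm_ring_1
begin
definition "0 = GI 0 0"
definition "1 = GI 1 0"
definition "x + y = GI (re x + re y) (im x + im y)"
definition "x - y = GI (re x - re y) (im x - im y)"
definition "- x = GI (- re x) (- im x)"
definition "x * y = GI (re x * re y - im x * im y) (re x * im y + im x * re y)"
instance
  by standard (auto simp: zero_gi_def one_gi_def plus_gi_def minus_gi_def uminus_gi_def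
      times_gi_def algebra_simps intro: gi.expand)
end

definition gi_map :: "('a \<Rightarrow> 'b) \<Rightarrow> 'a gi \<Rightarrow> 'b gi" where
  "gi_map f z = GI (f (re z)) (f (im z))"

definition gi_of :: "'a::comm_ring_1 \<Rightarrow> 'a gi" where
  "gi_of a = GI a 0"

end

theory Submission
  imports Defs
begin

lemma gi_simps:
  "GI a b + GI c d = GI (a + c) (b + d)"
  "GI a b * GI c d = GI (a*c - b*d) (a*d + b*c)"
  "- GI a b = GI (-a) (-b)"
  "(0::'a::comm_ring_1 gi) = GI 0 0"
  "(1::'a::comm_ring_1 gi) = GI 1 0"
  for a b c d :: "'a::comm_ring_1"
  by (simp_all add: plus_gi_def times_gi_def uminus_gi_def zero_gi_def one_gi_def)

lemma add_hom_diff: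
  fixes f :: "'a::comm_ring_1 \<Rightarrow> 'b::comm_ring_1"
  assumes "\<forall>x y. f (x + y) = f x + f y"
  shows "f (a - b) = f a - f b" "f 0 = 0"
proof -
  have "f (a - b) + f b = f a" using assms by (metis diff_add_cancel)
  then show "f (a - b) = f a - f b" by (metis add_diff_cancel)
  have "f 0 + f 0 = f 0" using assms by (metis add_0)
  then show "f 0 = 0" by simp
qed

lemma gi_map_hom:
  fixes f :: "'a::comm_ring_1 \<Rightarrow> 'b::comm_ring_1"
  assumes "f 1 = 1" "\<forall>x y. f (x + y) = f x + f y" "\<forall>x y. f (x * y) = f x * f y"
  shows "gi_map f 1 = 1" "\<forall>x y. gi_map f (x + y) = gi_map f x + gi_map f y"
    "\<forall>x y. gi_map f (x * y) = gi_map f x * gi_map f y"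
  using assms add_hom_diff[OF assms(2)]
  by (auto simp: gi_map_def one_gi_def plus_gi_def times_gi_def)

lemma gi_map_inj: "inj f \<Longrightarrow> inj (gi_map f)"
  by (auto simp: inj_def gi_map_def intro: gi.expand)

lemma gi_map_surj:
  fixes f :: "'a \<Rightarrow> 'b"
  assumes s: "surj f" shows "surj (gi_map f)"
proof -
  { fix z :: "'b gi"
    obtain a where "f a = re z" using s by (metis surjD)
    moreover obtain b where "f b = im z" using s by (metis surjD)
    ultimately have "\<exists>w. z = gi_map f w" by (metis gi.collapse gi_map_def gi.sel)
  }
  then show ?thesis by blast
qed

lemma gi_map_aut: "ring_automorphism f \<Longrightarrow> ring_automorphism (gi_map f)"
  unfolding ring_automorphism_def using gi_map_hom[of f] gi_map_inj gi_map_surj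
  by (metis bij_betw_def)

lemma gi_map_emb: "ring_embedding f \<Longrightarrow> ring_embedding (gi_map f)"
  unfolding ring_embedding_def using gi_map_hom[of f] gi_map_inj by metis

interpretation gi_hom: comm_ring_hom "gi_of :: 'a::comm_ring_1 \<Rightarrow> 'a gi"
  by unfold_locales (auto simp: gi_of_def gi_simps)

lemma gi_map_of: "gi_map f (gi_of x) = GI (f x) (f 0)"
  by (simp add: gi_map_def gi_of_def)

theorem lemma2p4:
  fixes \<phi> :: "'k::field_char_0 \<Rightarrow> 'k"
    and \<sigma> :: "'r::comm_ring_1 \<Rightarrow> 'r"
    and \<iota> :: "'k \<Rightarrow> 'r"
    and A :: "'k mat" and n :: nat
  assumes "ring_automorphism \<phi>"
    and "is_real (UNIV :: 'k set)"
    and "real_closed {c. \<phi> c = c}"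
    and "GL_mat n A"
    and "picard_vessiot \<phi> \<sigma> \<iota> n A"
    and "\<not> (\<exists>x::'r. x * x + 1 = 0)"
  shows "picard_vessiot (gi_map \<phi>) (gi_map \<sigma>) (gi_map \<iota>) n (map_mat gi_of A)"
proof -
  from assms(5) have ext: "difference_ring_ext \<phi> \<sigma> \<iota>" and Ac: "A \<in> carrier_mat n n"
    and simp: "simple_difference_ring \<sigma>"
    and "\<exists>U d. GL_mat n U \<and> map_mat \<sigma> U = map_mat \<iota> A * U \<and> d * det U = 1 \<and>
        subring_gen (range \<iota> \<union> {U $$ (i, j) | i j. i < n \<and> j < n} \<union> {d}) = UNIV"
    unfolding picard_vessiot_def by auto
  then obtain U d where U: "GL_mat n U" and eq: "map_mat \<sigma> U = map_mat \<iota> A * U"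
    and d: "d * det U = 1"
    and gen: "subring_gen (range \<iota> \<union> {U $$ (i, j) | i j. i < n \<and> j < n} \<union> {d}) = UNIV"
    by blast
  have sa: "ring_automorphism \<sigma>" and ie: "ring_embedding \<iota>"
    and comm: "\<forall>x. \<sigma> (\<iota> x) = \<iota> (\<phi> x)"
    using ext by (auto simp: difference_ring_ext_def)
  have s0: "\<sigma> 0 = 0" using sa add_hom_diff(2) unfolding ring_automorphism_def by blast
  have i0: "\<iota> 0 = 0" using ie add_hom_diff(2) unfolding ring_embedding_def by blast
  have Uc: "U \<in> carrier_mat n n" using U by (simp add: GL_mat_def)
  have ext': "difference_ring_ext (gi_map \<phi>) (gi_map \<sigma>) (gi_map \<iota>)"
    unfolding difference_ring_ext_def using gi_map_aut[OF assms(1)] gi_map_aut[OF sa] gi_map_emb[OF ie] comm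
    by (simp add: gi_map_def)
  define U' where "U' = map_mat gi_of U"
  define d' where "d' = gi_of d"
  have U'c: "U' \<in> carrier_mat n n" using Uc by (simp add: U'_def)
  have detU': "d' * det U' = 1"
    unfolding U'_def d'_def gi_hom.hom_det using d
    by (metis gi_hom.hom_mult gi_hom.hom_one)
  have GLU': "GL_mat n U'" using U'c detU' by (auto simp: GL_mat_def)
  have mm: "map_mat (gi_map \<sigma>) U' = map_mat gi_of (map_mat \<sigma> U)"
    by (rule eq_matI) (auto simp: U'_def gi_map_def s0 gi_of_def)
  have ma: "map_mat (gi_map \<iota>) (map_mat gi_of A) = map_mat gi_of (map_mat \<iota> A)"
    by (rule eq_matI) (auto simp: gi_map_def i0 gi_of_def)
  have eq': "map_mat (gi_map \<sigma>) U' = map_mat (gi_map \<iota>) (map_mat gi_of A) * U'"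
  proof -
    have "map_mat gi_of (map_mat \<iota> A * U) = map_mat gi_of (map_mat \<iota> A) * map_mat gi_of U"
      by (rule gi_hom.mat_hom_mult[of _ n n _ n]) (use Ac Uc in auto)
    then show ?thesis using mm ma eq by (simp add: U'_def)
  qed
  have gen': "subring_gen (range (gi_map \<iota>) \<union> {U' $$ (i, j) | i j. i < n \<and> j < n} \<union> {d'}) = UNIV"
  proof -
    let ?S = "range (gi_map \<iota>) \<union> {U' $$ (i, j) | i j. i < n \<and> j < n} \<union> {d'}"
    have "x \<in> T" if T: "is_subring T" "?S \<subseteq> T" for T x
    proof -
      define T0 where "T0 = {a. gi_of a \<in> T}"
      have "is_subring T0" using T(1) unfolding is_subring_def T0_def
        by (simp add: gi_hom.hom_add gi_hom.hom_mult gi_hom.hom_uminus)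
      moreover have "range \<iota> \<union> {U $$ (i, j) | i j. i < n \<and> j < n} \<union> {d} \<subseteq> T0"
      proof -
        have "gi_of (\<iota> a) \<in> T" for a
        proof -
          have "gi_map \<iota> (GI a 0) \<in> T" using T(2) by blast
          then show ?thesis using i0 by (simp add: gi_map_def gi_of_def)
        qed
        moreover have "gi_of (U $$ (i,j)) \<in> T" if "i < n" "j < n" for i j
        proof -
          have "U' $$ (i,j) \<in> T" using T(2) that by blast
          moreover have "U' $$ (i,j) = gi_of (U $$ (i,j))" using Uc that by (simp add: U'_def)
          ultimately show ?thesis by simp
        qed
        moreover have "gi_of d \<in> T" using T(2) d'_def by auto
        ultimately show ?thesis unfolding T0_def by blast
      qed
      ultimately have "T0 \<in> {T. is_subring T \<and> range \<iota> \<union> {U $$ (i, j) | i j. i < n \<and> j < n} \<union> {d} \<subseteq> T}"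
        by simp
      then have "subring_gen (range \<iota> \<union> {U $$ (i, j) | i j. i < n \<and> j < n} \<union> {d}) \<subseteq> T0"
        unfolding subring_gen_def by (rule Inter_lower)
      then have all: "gi_of a \<in> T" for a
        using gen unfolding T0_def by auto
      have e1: "gi_map \<iota> (GI 0 1) = GI 0 1" using i0 ie
        by (simp add: gi_map_def ring_embedding_def)
      have "gi_map \<iota> (GI 0 1) \<in> T" using T(2) by blast
      then have iT: "GI 0 1 \<in> T" by (simp only: e1)
      have xe: "gi_of (re x) + gi_of (im x) * GI 0 1 = x"
        by (cases x) (simp add: gi_of_def gi_simps)
      have "gi_of (re x) + gi_of (im x) * GI 0 1 \<in> T"
        using all[of "re x"] all[of "im x"] iT T(1) unfolding is_subring_def by blast
      then show "x \<in> T" by (simp only: xe)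
    qed
    then show ?thesis unfolding subring_gen_def by blast
  qed
  have simp': "simple_difference_ring (gi_map \<sigma>)"
    unfolding simple_difference_ring_def
  proof (intro allI impI)
    fix I :: "'r gi set"
    assume DI: "difference_ideal (gi_map \<sigma>) I"
    have I0: "0 \<in> I" and Iadd: "\<And>x y. x \<in> I \<Longrightarrow> y \<in> I \<Longrightarrow> x + y \<in> I"
      and Imul: "\<And>r x. x \<in> I \<Longrightarrow> r * x \<in> I"
      and Is: "\<And>x. x \<in> I \<Longrightarrow> gi_map \<sigma> x \<in> I"
      using DI unfolding difference_ideal_def is_ideal_def by auto
    define J where "J = {a. GI a 0 \<in> I}"
    define J' where "J' = {a. \<exists>b. GI a b \<in> I}"
    have "difference_ideal \<sigma> J"
      unfolding difference_ideal_def is_ideal_def J_def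
    proof (intro conjI ballI allI subsetI)
      show "0 \<in> {a. GI a 0 \<in> I}" using I0 by (simp add: gi_simps)
    next
      fix x y assume "x \<in> {a. GI a 0 \<in> I}" "y \<in> {a. GI a 0 \<in> I}"
      then show "x + y \<in> {a. GI a 0 \<in> I}" using Iadd[of "GI x 0" "GI y 0"] by (simp add: gi_simps)
    next
      fix r x assume "x \<in> {a. GI a 0 \<in> I}"
      then show "r * x \<in> {a. GI a 0 \<in> I}" using Imul[of "GI x 0" "GI r 0"] by (simp add: gi_simps)
    next
      fix z assume "z \<in> \<sigma> ` {a. GI a 0 \<in> I}"
      then obtain x where "z = \<sigma> x" "GI x 0 \<in> I" by auto
      then show "z \<in> {a. GI a 0 \<in> I}" using Is[of "GI x 0"] s0 by (simp add: gi_map_def)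
    qed
    then have Jc: "J = {0} \<or> J = UNIV" using simp unfolding simple_difference_ring_def by blast
    have "difference_ideal \<sigma> J'"
      unfolding difference_ideal_def is_ideal_def J'_def
    proof (intro conjI ballI allI subsetI)
      show "0 \<in> {a. \<exists>b. GI a b \<in> I}" using I0 by (auto simp: gi_simps)
    next
      fix x y assume "x \<in> {a. \<exists>b. GI a b \<in> I}" "y \<in> {a. \<exists>b. GI a b \<in> I}"
      then obtain b c where "GI x b \<in> I" "GI y c \<in> I" by auto
      then show "x + y \<in> {a. \<exists>b. GI a b \<in> I}" using Iadd[of "GI x b" "GI y c"] by (auto simp: gi_simps)
    next
      fix r x assume "x \<in> {a. \<exists>b. GI a b \<in> I}"
      then obtain b where "GI x b \<in> I" by auto
      then show "r * x \<in> {a. \<exists>b. GI a b \<in> I}" using Imul[of "GI x b" "GI r 0"] by (auto simp: gi_simps)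
    next
      fix z assume "z \<in> \<sigma> ` {a. \<exists>b. GI a b \<in> I}"
      then obtain x b where "z = \<sigma> x" "GI x b \<in> I" by auto
      then show "z \<in> {a. \<exists>b. GI a b \<in> I}" using Is[of "GI x b"] by (auto simp: gi_map_def)
    qed
    then have J'c: "J' = {0} \<or> J' = UNIV" using simp unfolding simple_difference_ring_def by blast
    show "I = {0} \<or> I = UNIV"
    proof (cases "J' = {0}")
      case True
      have "z = 0" if "z \<in> I" for z
      proof -
        have "re z \<in> J'" using that unfolding J'_def by (metis gi.collapse mem_Collect_eq)
        then have r: "re z = 0" using True by auto
        have "GI 0 1 * z \<in> I" using Imul that by blast
        moreover have "GI 0 1 * z = GI (- im z) (re z)"
          by (cases z) (simp add: gi_simps)
        ultimately have "- im z \<in> J'" unfolding J'_def by auto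
        then have "im z = 0" using True by auto
        then show ?thesis using r by (cases z) (simp add: gi_simps)
      qed
      then show ?thesis using I0 by blast
    next
      case False
      then have "1 \<in> J'" using J'c by auto
      then obtain b where b: "GI 1 b \<in> I" unfolding J'_def by auto
      have "GI 1 (- b) * GI 1 b \<in> I" using Imul b by blast
      moreover have "GI 1 (- b) * GI 1 b = GI (b * b + 1) 0" by (simp add: gi_simps)
      ultimately have "b * b + 1 \<in> J" unfolding J_def by auto
      moreover have "b * b + 1 \<noteq> 0" using assms(6) by blast
      ultimately have "J = UNIV" using Jc by auto
      then have "1 \<in> I" unfolding J_def by (auto simp: gi_simps)
      then have "I = UNIV" using Imul[of 1] by (metis UNIV_eq_I mult.right_neutral)
      then show ?thesis by blast
    qed
  qed
  show ?thesis
    unfolding picard_vessiot_def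
    using ext' Ac GLU' eq' detU' gen' simp' by auto
qed

end
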